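(* Let $\underline d=(1,d_1,\dots,d_r)$ and let $I_{r+1}\subset\cdots\subset I_1\subset I_0=\mathbb{C}[x_1,\dots,x_n]$ be a flag of monomial ideals with $\dim I_k/I_{k+1}=d_k$, with corresponding flag of partitions $\lambda_1\subset\lambda_2\subset\cdots\subset\lambda_{r+1}\subset\mathbb{Z}^n_{\ge0}$. Then the corresponding fixed point of $\mathrm{NHilb}^{\underline d}(\mathbb{A}^n)$ lies in $\mathrm{NHilb}^{\underline d}_{\mathrm{nil\text{-}fil}}(\mathbb{A}^n)$ if and only if for all $k\ge1$, all $\mathbf u\in\lambda_{k+1}\setminus\lambda_k$ and all $i=1,\dots,n$ we have $\mathbf u+e_i\notin\lambda_{k+1}$.
   Context: $\lambda_k$ is the set of exponents $\mathbf u\in\mathbb{Z}^n_{\ge0}$ with $x^{\mathbf u}\notin I_k$. $\mathrm{NHilb}^{\underline d}_{\mathrm{nil\text{-}fil}}(\mathbb{A}^n)$, the nilpotently filtered locus, is the locus of flags of ideals $I_{r+1}\subset\cdots\subset I_1\subset I_0=\mathbb{C}[x_1,\dots,x_n]$ with $\dim I_k/I_{k+1}=d_k$ such that $I_1=\mathfrak m=(x_1,\dots,x_n)$ and $I_1\cdot I_k\subset I_{k+1}$ for all $k$. $e_i$ is the $i$-th unit vector. *)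

theory Defs
  imports Complex_Main "HOL-Library.Poly_Mapping"
begin

(* Polynomial ring C[x_i : i in 'n] for a finite variable type 'n (n = CARD('n)).
  Exponent vectors u in Z_{>=0}^n are 'n =>0 nat; a polynomial maps exponents to coefficients. *)
type_synonym 'n cpoly = "('n \<Rightarrow>\<^sub>0 nat) \<Rightarrow>\<^sub>0 complex"

definition xmono :: "('n \<Rightarrow>\<^sub>0 nat) \<Rightarrow> 'n cpoly" where
  "xmono u = Poly_Mapping.single u 1"

definition const :: "complex \<Rightarrow> 'n cpoly" where
  "const c = Poly_Mapping.single 0 c"

definition is_ideal :: "'n cpoly set \<Rightarrow> bool" where
  "is_ideal I \<longleftrightarrow> 0 \<in> I \<and> (\<forall>f\<in>I. \<forall>g\<in>I. f + g \<in> I) \<and> (\<forall>f\<in>I. \<forall>h. h * f \<in> I)"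

definition ideal_gen :: "'n cpoly set \<Rightarrow> 'n cpoly set" where
  "ideal_gen S = \<Inter>{J. is_ideal J \<and> S \<subseteq> J}"

definition monomial_ideal :: "'n cpoly set \<Rightarrow> bool" where
  "monomial_ideal I \<longleftrightarrow> is_ideal I \<and> (\<exists>S. I = ideal_gen (xmono ` S))"

definition max_ideal :: "'n cpoly set" where
  "max_ideal = ideal_gen {xmono (Poly_Mapping.single i 1) | i. True}"

(* dim_C (I/J) = d, for J \<subseteq> I: there is a family of d elements of I whose classes form a
  C-basis of I/J. *)
definition quot_dim :: "'n cpoly set \<Rightarrow> 'n cpoly set \<Rightarrow> nat \<Rightarrow> bool" where
  "quot_dim I J d \<longleftrightarrow> (\<exists>B. finite B \<and> card B = d \<and> B \<subseteq> I \<and>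
     (\<forall>c. (\<Sum>b\<in>B. const (c b) * b) \<in> J \<longrightarrow> (\<forall>b\<in>B. c b = 0)) \<and>
     (\<forall>f\<in>I. \<exists>c. f - (\<Sum>b\<in>B. const (c b) * b) \<in> J))"

(* lambda_k: exponents of monomials not in I_k. *)
definition lam :: "'n cpoly set \<Rightarrow> ('n \<Rightarrow>\<^sub>0 nat) set" where
  "lam I = {u. xmono u \<notin> I}"

definition is_flag :: "nat \<Rightarrow> (nat \<Rightarrow> nat) \<Rightarrow> (nat \<Rightarrow> 'n cpoly set) \<Rightarrow> bool" where
  "is_flag r d I \<longleftrightarrow> d 0 = 1 \<and> I 0 = UNIV \<and> (\<forall>k\<le>r+1. is_ideal (I k)) \<and>
     (\<forall>k\<le>r. I (Suc k) \<subseteq> I k \<and> quot_dim (I k) (I (Suc k)) (d k))"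

definition nil_filtered :: "nat \<Rightarrow> (nat \<Rightarrow> 'n cpoly set) \<Rightarrow> bool" where
  "nil_filtered r I \<longleftrightarrow> I 1 = max_ideal \<and>
     (\<forall>k\<le>r. ideal_gen {a * b | a b. a \<in> I 1 \<and> b \<in> I k} \<subseteq> I (Suc k))"

end

theory Submission
  imports Defs
begin

lemma expand: "(f::'n cpoly) = (\<Sum>u\<in>Poly_Mapping.keys f. Poly_Mapping.single u (Poly_Mapping.lookup f u))"
  by (rule poly_mapping_eqI) (auto simp add: lookup_sum lookup_single when_def in_keys_iff sum.delta' split: if_splits)

lemma lookup_const_mult: "Poly_Mapping.lookup (const c * (b::'n cpoly)) u = c * Poly_Mapping.lookup b u"
  unfolding const_def mult_map_scale_conv_mult[symmetric]
  by (simp add: Poly_Mapping.map.rep_eq when_def)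

lemma xmono_mult: "xmono u * xmono v = (xmono (u+v) :: 'n cpoly)"
  by (simp add: xmono_def mult_single)

lemma const_xmono: "const c * xmono u = (Poly_Mapping.single u c :: 'n cpoly)"
  by (simp add: xmono_def const_def mult_single)

lemma ideal_sum:
  assumes "is_ideal J" "finite A" "\<forall>a\<in>A. g a \<in> J" shows "sum g A \<in> J"
  using assms(2,3) by (induction A rule: finite_induct) (use assms(1) in \<open>auto simp: is_ideal_def\<close>)

lemma ideal_from_monos:
  assumes "is_ideal J" "\<forall>u\<in>Poly_Mapping.keys (f::'n cpoly). xmono u \<in> J"
  shows "f \<in> J"
proof -
  have "(\<Sum>u\<in>Poly_Mapping.keys f. Poly_Mapping.single u (Poly_Mapping.lookup f u)) \<in> J"
    using assms by (intro ideal_sum) (auto simp: const_xmono[symmetric] is_ideal_def)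
  then show ?thesis using expand[of f] by simp
qed

definition MS :: "('n \<Rightarrow>\<^sub>0 nat) set \<Rightarrow> 'n cpoly set" where
  "MS S = {f. \<forall>u\<in>Poly_Mapping.keys f. \<exists>s\<in>S. \<exists>v. u = s + v}"

lemma MS_ideal: "is_ideal (MS S)"
  unfolding is_ideal_def MS_def
proof (intro conjI ballI allI)
  fix f g :: "'a cpoly"
  assume "f \<in> {f. \<forall>u\<in>Poly_Mapping.keys f. \<exists>s\<in>S. \<exists>v. u = s + v}"
     and "g \<in> {f. \<forall>u\<in>Poly_Mapping.keys f. \<exists>s\<in>S. \<exists>v. u = s + v}"
  then show "f + g \<in> {f. \<forall>u\<in>Poly_Mapping.keys f. \<exists>s\<in>S. \<exists>v. u = s + v}"
    using keys_add[of f g] by blast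
next
  fix f h :: "'a cpoly"
  assume f: "f \<in> {f. \<forall>u\<in>Poly_Mapping.keys f. \<exists>s\<in>S. \<exists>v. u = s + v}"
  show "h * f \<in> {f. \<forall>u\<in>Poly_Mapping.keys f. \<exists>s\<in>S. \<exists>v. u = s + v}"
  proof (safe)
    fix u assume "u \<in> Poly_Mapping.keys (h * f)"
    then obtain a b where "u = a + b" "b \<in> Poly_Mapping.keys f" using keys_mult[of h f] by blast
    then obtain s v where "s \<in> S" "b = s + v" using f by blast
    then show "\<exists>s\<in>S. \<exists>v. u = s + v" using \<open>u = a + b\<close> by (metis add.left_commute)
  qed
qed auto

lemma gen_sub: "xmono ` S \<subseteq> MS S"
  by (auto simp: MS_def xmono_def) (metis add.right_neutral)

lemma ideal_gen_least: "is_ideal J \<Longrightarrow> T \<subseteq> J \<Longrightarrow> ideal_gen T \<subseteq> J"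
  unfolding ideal_gen_def by blast

lemma ideal_gen_sup: "T \<subseteq> ideal_gen T"
  unfolding ideal_gen_def by blast

lemma ideal_gen_ideal: "is_ideal (ideal_gen T)"
  unfolding ideal_gen_def is_ideal_def by blast

lemma mono_char:
  assumes "monomial_ideal I"
  shows "(f::'n cpoly) \<in> I \<longleftrightarrow> (\<forall>u\<in>Poly_Mapping.keys f. xmono u \<in> I)"
proof
  assume "f \<in> I"
  from assms obtain S where I: "is_ideal I" "I = ideal_gen (xmono ` S)" unfolding monomial_ideal_def by blast
  have "I \<subseteq> MS S" using I ideal_gen_least[OF MS_ideal gen_sub] by simp
  show "\<forall>u\<in>Poly_Mapping.keys f. xmono u \<in> I"
  proof
    fix u assume "u \<in> Poly_Mapping.keys f"
    then obtain s v where "s \<in> S" "u = s + v" using \<open>f \<in> I\<close> \<open>I \<subseteq> MS S\<close> unfolding MS_def by blast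
    have "xmono s \<in> I" using I ideal_gen_sup \<open>s \<in> S\<close> by blast
    then have "xmono v * xmono s \<in> I" using I(1) unfolding is_ideal_def by blast
    then show "xmono u \<in> I" by (simp add: xmono_mult \<open>u = s + v\<close> add.commute)
  qed
next
  assume "\<forall>u\<in>Poly_Mapping.keys f. xmono u \<in> I"
  then show "f \<in> I" using ideal_from_monos assms unfolding monomial_ideal_def by blast
qed

lemma lookup_zero_out:
  assumes "monomial_ideal I" "f \<in> I" "xmono u \<notin> I"
  shows "Poly_Mapping.lookup (f::'n cpoly) u = 0"
  using mono_char[OF assms(1)] assms(2,3) by (meson in_keys_iff)

lemma nonzero_decomp:
  assumes "(u::'n \<Rightarrow>\<^sub>0 nat) \<noteq> 0"
  shows "\<exists>i v. u = Poly_Mapping.single i 1 + v"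
proof -
  obtain i where "Poly_Mapping.lookup u i \<noteq> 0"
    using assms by (metis lookup_zero poly_mapping_eqI)
  then have "u = Poly_Mapping.single i 1 + (u - Poly_Mapping.single i 1)"
    by (intro poly_mapping_eqI) (auto simp: lookup_add lookup_minus lookup_single when_def)
  then show ?thesis by blast
qed

lemma max_monomial: "monomial_ideal (max_ideal :: 'n cpoly set)"
  unfolding monomial_ideal_def max_ideal_def
  by (intro conjI ideal_gen_ideal exI[of _ "{Poly_Mapping.single i 1 | i. True}"]) (rule arg_cong[where f=ideal_gen], blast)

lemma max_mono: "xmono u \<in> (max_ideal :: 'n cpoly set) \<longleftrightarrow> u \<noteq> 0"
proof
  assume "xmono u \<in> (max_ideal :: 'n cpoly set)"
  moreover have "(max_ideal :: 'n cpoly set) \<subseteq> MS {Poly_Mapping.single i 1 | i. True}"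
    unfolding max_ideal_def
    by (rule ideal_gen_least[OF MS_ideal]) (auto simp: MS_def xmono_def, metis add.right_neutral)
  ultimately have "xmono u \<in> MS {Poly_Mapping.single i 1 | i. True}" by (rule subsetD[rotated])
  moreover have "u \<in> Poly_Mapping.keys (xmono u :: 'n cpoly)" by (simp add: xmono_def)
  ultimately obtain s v where "s \<in> {Poly_Mapping.single i 1 | i. True}" "u = s + v"
    unfolding MS_def by blast
  then obtain i where "u = Poly_Mapping.single i 1 + v" by auto
  then have "Poly_Mapping.lookup u i \<noteq> 0" by (simp add: lookup_add)
  then show "u \<noteq> 0" by auto
next
  assume "u \<noteq> 0"
  then obtain i v where uv: "u = Poly_Mapping.single i 1 + v" using nonzero_decomp by blast
  have "xmono (Poly_Mapping.single i 1) \<in> {xmono (Poly_Mapping.single i 1) | i. True}" by blast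
  then have "xmono (Poly_Mapping.single i 1) \<in> (max_ideal :: 'n cpoly set)"
    unfolding max_ideal_def by (rule subsetD[OF ideal_gen_sup])
  moreover have "\<forall>f\<in>(max_ideal :: 'n cpoly set). \<forall>h. h * f \<in> max_ideal"
    using ideal_gen_ideal[of "{xmono (Poly_Mapping.single i 1) | i. True}"]
    unfolding max_ideal_def is_ideal_def by (elim conjE)
  ultimately have "xmono v * xmono (Poly_Mapping.single i 1) \<in> (max_ideal :: 'n cpoly set)"
    by blast
  then show "xmono u \<in> (max_ideal :: 'n cpoly set)" by (simp add: xmono_mult uv add.commute)
qed


lemma single_ne0: "Poly_Mapping.single i (1::nat) \<noteq> 0"
proof
  assume "Poly_Mapping.single i (1::nat) = 0"
  then have "Poly_Mapping.lookup (Poly_Mapping.single i (1::nat)) i = Poly_Mapping.lookup 0 i" by simp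
  then show False by simp
qed

lemma lookup_xmono: "Poly_Mapping.lookup (xmono u :: 'n cpoly) w = (if u = w then 1 else 0)"
  by (simp add: xmono_def lookup_single when_def)

lemma ideal_mult: "is_ideal J \<Longrightarrow> f \<in> J \<Longrightarrow> h * f \<in> J"
  unfolding is_ideal_def by blast

lemma I1_max:
  assumes fl: "is_flag r d (I :: nat \<Rightarrow> 'n cpoly set)" and m1: "monomial_ideal (I 1)"
  shows "I 1 = max_ideal"
proof -
  have id1: "is_ideal (I 1)" using m1 unfolding monomial_ideal_def by blast
  have "quot_dim (I 0) (I (Suc 0)) (d 0)" using fl unfolding is_flag_def by blast
  then have qd: "quot_dim UNIV (I 1) 1" using fl unfolding is_flag_def by simp
  then obtain B where B: "finite B" "card B = 1"
     "\<forall>c. (\<Sum>b\<in>B. const (c b) * b) \<in> I 1 \<longrightarrow> (\<forall>b\<in>B. c b = 0)"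
     "\<forall>f. \<exists>c. f - (\<Sum>b\<in>B. const (c b) * b) \<in> I 1"
    unfolding quot_dim_def by blast
  from B(2) obtain b where Bb: "B = {b}" using card_1_singletonE by blast
  have indep: "\<And>c. const c * b \<in> I 1 \<Longrightarrow> c = 0"
  proof -
    fix c assume "const c * b \<in> I 1"
    then show "c = 0" using B(3)[rule_format, of "\<lambda>_. c"] Bb by simp
  qed
  have span: "\<And>f. \<exists>c. f - const c * b \<in> I 1"
    using B(4) Bb by (simp, metis)
  have z0: "xmono 0 \<notin> I 1"
  proof
    assume "xmono 0 \<in> I 1"
    then have "const 1 * b * xmono 0 \<in> I 1" using id1 ideal_mult by blast
    then have "const 1 * b \<in> I 1" by (simp add: xmono_def)
    then show False using indep by fastforce
  qed
  have ze: "xmono (Poly_Mapping.single i 1) \<in> I 1" for i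
  proof (rule ccontr)
    let ?e = "Poly_Mapping.single i (1::nat)"
    assume ne: "xmono ?e \<notin> I 1"
    have e0: "?e \<noteq> 0" by (rule single_ne0)
    obtain c1 where h1: "xmono 0 - const c1 * b \<in> I 1" using span by blast
    obtain c2 where h2: "xmono ?e - const c2 * b \<in> I 1" using span by blast
    have a1: "Poly_Mapping.lookup (xmono 0 - const c1 * b) 0 = 0"
      using lookup_zero_out[OF m1 h1 z0] .
    have a2: "Poly_Mapping.lookup (xmono 0 - const c1 * b) ?e = 0"
      using lookup_zero_out[OF m1 h1 ne] .
    have a3: "Poly_Mapping.lookup (xmono ?e - const c2 * b) ?e = 0"
      using lookup_zero_out[OF m1 h2 ne] .
    from a1 have "1 - c1 * Poly_Mapping.lookup b 0 = 0"
      by (simp add: lookup_minus lookup_const_mult lookup_xmono)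
    then have "c1 \<noteq> 0" by auto
    moreover from a2 e0 have "c1 * Poly_Mapping.lookup b ?e = 0"
      by (simp add: lookup_minus lookup_const_mult lookup_xmono)
    moreover from a3 have "1 - c2 * Poly_Mapping.lookup b ?e = 0"
      by (simp add: lookup_minus lookup_const_mult lookup_xmono)
    ultimately show False by auto
  qed
  have key: "xmono u \<in> I 1 \<longleftrightarrow> xmono u \<in> (max_ideal :: 'n cpoly set)" for u
  proof (cases "u = 0")
    case True then show ?thesis using z0 max_mono by blast
  next
    case False
    then obtain i v where uv: "u = Poly_Mapping.single i 1 + v" using nonzero_decomp by blast
    have "xmono v * xmono (Poly_Mapping.single i 1) \<in> I 1" using ze id1 ideal_mult by blast
    then have "xmono u \<in> I 1" by (simp add: xmono_mult uv add.commute)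
    then show ?thesis using False max_mono by blast
  qed
  show ?thesis
  proof (rule set_eqI)
    fix f :: "'n cpoly"
    show "f \<in> I 1 \<longleftrightarrow> f \<in> max_ideal"
      using mono_char[OF m1, of f] mono_char[OF max_monomial, of f] key by blast
  qed
qed

lemma step:
  assumes mA: "monomial_ideal (A :: 'n cpoly set)" and mB: "monomial_ideal (B :: 'n cpoly set)"
  shows "ideal_gen {a * b | a b. a \<in> max_ideal \<and> b \<in> A} \<subseteq> B \<longleftrightarrow>
    (\<forall>u \<in> lam B - lam A. \<forall>i::'n. u + Poly_Mapping.single i 1 \<notin> lam B)"
proof
  assume sub: "ideal_gen {a * b | a b. a \<in> max_ideal \<and> b \<in> A} \<subseteq> B"
  show "\<forall>u \<in> lam B - lam A. \<forall>i::'n. u + Poly_Mapping.single i 1 \<notin> lam B"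
  proof (intro ballI allI)
    fix u and i :: 'n assume "u \<in> lam B - lam A"
    then have uA: "xmono u \<in> A" unfolding lam_def by blast
    have "Poly_Mapping.single i (1::nat) \<noteq> 0" by (rule single_ne0)
    then have "xmono (Poly_Mapping.single i 1) \<in> (max_ideal :: 'n cpoly set)" using max_mono by blast
    then have "xmono (Poly_Mapping.single i 1) * xmono u \<in> {a * b | a b. a \<in> max_ideal \<and> b \<in> A}"
      using uA by auto
    then have "xmono (Poly_Mapping.single i 1) * xmono u \<in> B" by (rule subsetD[OF sub subsetD[OF ideal_gen_sup]])
    then show "u + Poly_Mapping.single i 1 \<notin> lam B"
      unfolding lam_def by (simp add: xmono_mult add.commute)
  qed
next
  assume cond: "\<forall>u \<in> lam B - lam A. \<forall>i::'n. u + Poly_Mapping.single i 1 \<notin> lam B"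
  have idB: "is_ideal B" using mB unfolding monomial_ideal_def by blast
  show "ideal_gen {a * b | a b. a \<in> max_ideal \<and> b \<in> A} \<subseteq> B"
  proof (rule ideal_gen_least[OF idB], safe)
    fix a b :: "'n cpoly" assume a: "a \<in> max_ideal" and b: "b \<in> A"
    show "a * b \<in> B"
    proof (subst mono_char[OF mB], rule ballI)
      fix w assume "w \<in> Poly_Mapping.keys (a * b)"
      then obtain p q where w: "w = p + q" and p: "p \<in> Poly_Mapping.keys a" and q: "q \<in> Poly_Mapping.keys b"
        using keys_mult[of a b] by blast
      have "xmono p \<in> (max_ideal :: 'n cpoly set)" using mono_char[OF max_monomial, of a] a p by simp
      then have "p \<noteq> 0" using max_mono by blast
      then obtain i p' where pp: "p = Poly_Mapping.single i 1 + p'" using nonzero_decomp by blast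
      have qA: "xmono q \<in> A" using mono_char[OF mA, of b] b q by simp
      have qe: "xmono (q + Poly_Mapping.single i 1) \<in> B"
      proof (cases "xmono q \<in> B")
        case True
        then have "xmono (Poly_Mapping.single i 1) * xmono q \<in> B" by (rule ideal_mult[OF idB])
        then show ?thesis by (simp add: xmono_mult add.commute)
      next
        case False
        then have "q \<in> lam B - lam A" using qA unfolding lam_def by blast
        then show ?thesis using cond unfolding lam_def by blast
      qed
      then have "xmono p' * xmono (q + Poly_Mapping.single i 1) \<in> B" by (rule ideal_mult[OF idB])
      moreover have "p' + (q + Poly_Mapping.single i 1) = w" using w pp by (simp add: add_ac)
      ultimately show "xmono w \<in> B" by (simp add: xmono_mult)
    qed
  qed
qed

theorem mainTheorem19:
  fixes r :: nat and d :: "nat \<Rightarrow> nat" and I :: "nat \<Rightarrow> ('n::finite) cpoly set"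
  assumes "is_flag r d I"
    and "\<forall>k\<le>r+1. monomial_ideal (I k)"
  shows "nil_filtered r I \<longleftrightarrow>
    (\<forall>k\<in>{1..r}. \<forall>u \<in> lam (I (Suc k)) - lam (I k). \<forall>i::'n.
        u + Poly_Mapping.single i 1 \<notin> lam (I (Suc k)))"
proof -
  have m1: "monomial_ideal (I 1)" using assms(2) by simp
  have I1: "I 1 = max_ideal" using I1_max[OF assms(1) m1] .
  have id1: "is_ideal (I 1)" using m1 unfolding monomial_ideal_def by blast
  have g0: "ideal_gen {a * b | a b. a \<in> I 1 \<and> b \<in> I 0} \<subseteq> I (Suc 0)"
    by (rule ideal_gen_least) (use id1 ideal_mult in \<open>auto simp: mult.commute\<close>)
  have gk: "ideal_gen {a * b | a b. a \<in> I 1 \<and> b \<in> I k} \<subseteq> I (Suc k) \<longleftrightarrow>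
    (\<forall>u \<in> lam (I (Suc k)) - lam (I k). \<forall>i::'n. u + Poly_Mapping.single i 1 \<notin> lam (I (Suc k)))"
    if "k \<in> {1..r}" for k
    unfolding I1 using that assms(2) by (intro step) auto
  have "nil_filtered r I \<longleftrightarrow> (\<forall>k\<le>r. ideal_gen {a * b | a b. a \<in> I 1 \<and> b \<in> I k} \<subseteq> I (Suc k))"
    unfolding nil_filtered_def using I1 by simp
  also have "\<dots> \<longleftrightarrow> (\<forall>k\<in>{1..r}. \<forall>u \<in> lam (I (Suc k)) - lam (I k). \<forall>i::'n.
        u + Poly_Mapping.single i 1 \<notin> lam (I (Suc k)))"
  proof
    assume "\<forall>k\<le>r. ideal_gen {a * b | a b. a \<in> I 1 \<and> b \<in> I k} \<subseteq> I (Suc k)"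
    then show "\<forall>k\<in>{1..r}. \<forall>u \<in> lam (I (Suc k)) - lam (I k). \<forall>i::'n.
        u + Poly_Mapping.single i 1 \<notin> lam (I (Suc k))" using gk by auto
  next
    assume h: "\<forall>k\<in>{1..r}. \<forall>u \<in> lam (I (Suc k)) - lam (I k). \<forall>i::'n.
        u + Poly_Mapping.single i 1 \<notin> lam (I (Suc k))"
    show "\<forall>k\<le>r. ideal_gen {a * b | a b. a \<in> I 1 \<and> b \<in> I k} \<subseteq> I (Suc k)"
    proof (intro allI impI)
      fix k assume "k \<le> r"
      show "ideal_gen {a * b | a b. a \<in> I 1 \<and> b \<in> I k} \<subseteq> I (Suc k)"
      proof (cases "k = 0")
        case True then show ?thesis using g0 by simp
      next
        case False then show ?thesis using gk[of k] h \<open>k \<le> r\<close> by auto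
      qed
    qed
  qed
  finally show ?thesis .
qed

end
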